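(* Let $S=\{R_0,\dots,R_d\}$ be a quasi-thin scheme on $X$, $\mathbb F$ a field, $x\in X$, $E_a^*=E_a^*(x)$, and let $\mathcal T_0$ be the $\mathbb F$-linear span of $\{E_i^*A_jE_\ell^*:R_i,R_j,R_\ell\in S\}$. Then $\mathcal T_0$ is a unital $\mathbb F$-subalgebra of $M_X(\mathbb F)$ if and only if there do not exist $R_u,R_v,R_w,R_y,R_z\in S$ with $k_u=k_v=k_w=k_y=k_z=2$ and $p_{uv}^w=p_{wy}^z=|R_{u'}R_z|=1$.
   Context: Let $X$ be a nonempty finite set. A scheme of class $d$ on $X$ is a partition $S=\{R_0,\dots,R_d\}$ of $X\times X$ into nonempty sets such that $R_0=\{(b,b):b\in X\}$; for each $c$ there is $c'$ with $R_{c'}=\{(f,e):(e,f)\in R_c\}$; and for all $i,j,k$ the intersection number $p_{ij}^k=|\{\ell\in X:(m,\ell)\in R_i,(\ell,n)\in R_j\}|$ does not depend on $(m,n)\in R_k$. The valency is $k_a=p_{aa'}^0$; quasi-thin means all $k_a\le2$; complex product $R_aR_b=\{R_c:p_{ab}^c>0\}$. For $y\in X$, $yR_a=\{z:(y,z)\in R_a\}$. $A_a\in M_X(\mathbb F)$ is the $(0,1)$ adjacency matrix of $R_a$ and $E_a^*(y)$ is the diagonal $(0,1)$-matrix with ones exactly at positions indexed by $yR_a$. *)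

theory Defs
  imports Main
begin

definition is_scheme :: "'a set \<Rightarrow> nat \<Rightarrow> (nat \<Rightarrow> ('a \<times> 'a) set) \<Rightarrow> bool" where
  "is_scheme X d R \<longleftrightarrow>
     finite X \<and> X \<noteq> {} \<and>
     (\<forall>i\<le>d. R i \<noteq> {} \<and> R i \<subseteq> X \<times> X) \<and>
     (\<forall>i\<le>d. \<forall>j\<le>d. i \<noteq> j \<longrightarrow> R i \<inter> R j = {}) \<and>
     (\<Union>i\<in>{0..d}. R i) = X \<times> X \<and>
     R 0 = {(b, b) | b. b \<in> X} \<and>
     (\<forall>c\<le>d. \<exists>c'\<le>d. R c' = {(f, e). (e, f) \<in> R c}) \<and>
     (\<forall>i\<le>d. \<forall>j\<le>d. \<forall>k\<le>d. \<forall>m n m2 n2. (m, n) \<in> R k \<longrightarrow> (m2, n2) \<in> R k \<longrightarrow>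
        card {l \<in> X. (m, l) \<in> R i \<and> (l, n) \<in> R j} = card {l \<in> X. (m2, l) \<in> R i \<and> (l, n2) \<in> R j})"

text \<open>Intersection number p_{ij}^k (well defined for a scheme, evaluated at some pair of R k).\<close>
definition pnum :: "'a set \<Rightarrow> (nat \<Rightarrow> ('a \<times> 'a) set) \<Rightarrow> nat \<Rightarrow> nat \<Rightarrow> nat \<Rightarrow> nat" where
  "pnum X R i j k = (let (m, n) = (SOME mn. mn \<in> R k) in
      card {l \<in> X. (m, l) \<in> R i \<and> (l, n) \<in> R j})"

definition conv_idx :: "nat \<Rightarrow> (nat \<Rightarrow> ('a \<times> 'a) set) \<Rightarrow> nat \<Rightarrow> nat" where
  "conv_idx d R c = (SOME c'. c' \<le> d \<and> R c' = {(f, e). (e, f) \<in> R c})"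

definition valency :: "'a set \<Rightarrow> nat \<Rightarrow> (nat \<Rightarrow> ('a \<times> 'a) set) \<Rightarrow> nat \<Rightarrow> nat" where
  "valency X d R a = pnum X R a (conv_idx d R a) 0"

definition quasi_thin :: "'a set \<Rightarrow> nat \<Rightarrow> (nat \<Rightarrow> ('a \<times> 'a) set) \<Rightarrow> bool" where
  "quasi_thin X d R \<longleftrightarrow> (\<forall>a\<le>d. valency X d R a \<le> 2)"

definition cplx_prod :: "'a set \<Rightarrow> nat \<Rightarrow> (nat \<Rightarrow> ('a \<times> 'a) set) \<Rightarrow> nat \<Rightarrow> nat \<Rightarrow> ('a \<times> 'a) set set" where
  "cplx_prod X d R a b = {R c | c. c \<le> d \<and> pnum X R a b c > 0}"

text \<open>Matrices in M_X(F) are represented as functions 'a => 'a => 'f vanishing outside X x X.\<close>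
definition matrices :: "'a set \<Rightarrow> ('a \<Rightarrow> 'a \<Rightarrow> 'f::field) set" where
  "matrices X = {M. \<forall>y z. (y \<notin> X \<or> z \<notin> X) \<longrightarrow> M y z = 0}"

definition mat_mult :: "'a set \<Rightarrow> ('a \<Rightarrow> 'a \<Rightarrow> 'f::field) \<Rightarrow> ('a \<Rightarrow> 'a \<Rightarrow> 'f) \<Rightarrow> ('a \<Rightarrow> 'a \<Rightarrow> 'f)" where
  "mat_mult X A B = (\<lambda>y z. \<Sum>w\<in>X. A y w * B w z)"

definition mat_one :: "'a set \<Rightarrow> ('a \<Rightarrow> 'a \<Rightarrow> 'f::field)" where
  "mat_one X = (\<lambda>y z. if y = z \<and> y \<in> X then 1 else 0)"

definition adj_mat :: "(nat \<Rightarrow> ('a \<times> 'a) set) \<Rightarrow> nat \<Rightarrow> ('a \<Rightarrow> 'a \<Rightarrow> 'f::field)" where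
  "adj_mat R a = (\<lambda>y z. if (y, z) \<in> R a then 1 else 0)"

definition dual_idem :: "(nat \<Rightarrow> ('a \<times> 'a) set) \<Rightarrow> 'a \<Rightarrow> nat \<Rightarrow> ('a \<Rightarrow> 'a \<Rightarrow> 'f::field)" where
  "dual_idem R x a = (\<lambda>y z. if y = z \<and> (x, y) \<in> R a then 1 else 0)"

definition T0 :: "'a set \<Rightarrow> nat \<Rightarrow> (nat \<Rightarrow> ('a \<times> 'a) set) \<Rightarrow> 'a \<Rightarrow> ('a \<Rightarrow> 'a \<Rightarrow> 'f::field) set" where
  "T0 X d R x = {M. \<exists>c :: nat \<Rightarrow> nat \<Rightarrow> nat \<Rightarrow> 'f.
      M = (\<lambda>y z. \<Sum>i\<in>{0..d}. \<Sum>j\<in>{0..d}. \<Sum>l\<in>{0..d}.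
             c i j l * mat_mult X (mat_mult X (dual_idem R x i) (adj_mat R j)) (dual_idem R x l) y z)}"

definition unital_subalgebra :: "'a set \<Rightarrow> ('a \<Rightarrow> 'a \<Rightarrow> 'f::field) set \<Rightarrow> bool" where
  "unital_subalgebra X T \<longleftrightarrow>
     T \<subseteq> matrices X \<and>
     (\<lambda>y z. 0) \<in> T \<and>
     (\<forall>A\<in>T. \<forall>B\<in>T. (\<lambda>y z. A y z + B y z) \<in> T) \<and>
     (\<forall>c. \<forall>A\<in>T. (\<lambda>y z. c * A y z) \<in> T) \<and>
     (\<forall>A\<in>T. \<forall>B\<in>T. mat_mult X A B \<in> T) \<and>
     mat_one X \<in> T"

end

theory Submission
  imports Defs
begin

locale qts =
  fixes X :: "'a set" and d :: nat and R :: "nat \<Rightarrow> ('a \<times> 'a) set" and x :: 'a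
  assumes sch: "is_scheme X d R" and qt: "quasi_thin X d R" and xX: "x \<in> X"
begin

lemmas S = sch[unfolded is_scheme_def]
lemmas finX = S[THEN conjunct1]
lemmas Xne = S[THEN conjunct2, THEN conjunct1]
lemmas Rsub' = S[THEN conjunct2, THEN conjunct2, THEN conjunct1]
lemmas disj' = S[THEN conjunct2, THEN conjunct2, THEN conjunct2, THEN conjunct1]
lemmas union' = S[THEN conjunct2, THEN conjunct2, THEN conjunct2, THEN conjunct2, THEN conjunct1]
lemmas R0' = S[THEN conjunct2, THEN conjunct2, THEN conjunct2, THEN conjunct2, THEN conjunct2, THEN conjunct1]
lemmas conv' = S[THEN conjunct2, THEN conjunct2, THEN conjunct2, THEN conjunct2, THEN conjunct2, THEN conjunct2, THEN conjunct1]
lemmas const' = S[THEN conjunct2, THEN conjunct2, THEN conjunct2, THEN conjunct2, THEN conjunct2, THEN conjunct2, THEN conjunct2]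

lemma R_sub: "i \<le> d \<Longrightarrow> (p, q) \<in> R i \<Longrightarrow> p \<in> X \<and> q \<in> X"
  using Rsub' by blast

lemma R_ne: "i \<le> d \<Longrightarrow> R i \<noteq> {}"
  using Rsub' by blast

lemma disj: "i \<le> d \<Longrightarrow> j \<le> d \<Longrightarrow> (p, q) \<in> R i \<Longrightarrow> (p, q) \<in> R j \<Longrightarrow> i = j"
  using disj' by blast

lemma cover: "p \<in> X \<Longrightarrow> q \<in> X \<Longrightarrow> \<exists>k\<le>d. (p, q) \<in> R k"
proof -
  assume "p \<in> X" "q \<in> X"
  then have "(p,q) \<in> (\<Union>i\<in>{0..d}. R i)" using union' by auto
  then show ?thesis by auto
qed

lemma R0: "(p, q) \<in> R 0 \<longleftrightarrow> p = q \<and> p \<in> X"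
  using R0' by blast

lemma conv_ex: "c \<le> d \<Longrightarrow> \<exists>c'\<le>d. \<forall>p q. (p, q) \<in> R c' \<longleftrightarrow> (q, p) \<in> R c"
proof -
  assume "c \<le> d"
  then obtain c' where "c' \<le> d" "R c' = {(f, e). (e, f) \<in> R c}" using conv' by blast
  then show ?thesis by auto
qed

lemma const:
  assumes "i \<le> d" "j \<le> d" "k \<le> d" "(m, n) \<in> R k" "(m2, n2) \<in> R k"
  shows "card {l \<in> X. (m, l) \<in> R i \<and> (l, n) \<in> R j} = card {l \<in> X. (m2, l) \<in> R i \<and> (l, n2) \<in> R j}"
  using const'[rule_format, OF assms] .

lemma pnum_eq:
  assumes "i \<le> d" "j \<le> d" "k \<le> d" "(p, q) \<in> R k"
  shows "pnum X R i j k = card {z \<in> X. (p, z) \<in> R i \<and> (z, q) \<in> R j}"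
proof -
  have ex: "\<exists>mn. mn \<in> R k" using assms by auto
  obtain m n where mn: "(SOME mn. mn \<in> R k) = (m, n)" by (cases "SOME mn. mn \<in> R k")
  have "(m, n) \<in> R k" using someI_ex[OF ex] mn by simp
  then have "card {z \<in> X. (m, z) \<in> R i \<and> (z, n) \<in> R j} = card {z \<in> X. (p, z) \<in> R i \<and> (z, q) \<in> R j}"
    using const[OF assms(1,2,3) _ assms(4)] by blast
  then show ?thesis unfolding pnum_def mn by simp
qed

lemma conv_idx:
  assumes "c \<le> d"
  shows "conv_idx d R c \<le> d \<and> (\<forall>p q. (p, q) \<in> R (conv_idx d R c) \<longleftrightarrow> (q, p) \<in> R c)"
proof -
  have ex: "\<exists>c'. c' \<le> d \<and> R c' = {(f, e). (e, f) \<in> R c}" using conv' assms by blast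
  have "conv_idx d R c \<le> d \<and> R (conv_idx d R c) = {(f, e). (e, f) \<in> R c}"
    unfolding conv_idx_def by (rule someI_ex[OF ex])
  then show ?thesis by auto
qed

lemma valency_eq:
  assumes "a \<le> d" "p \<in> X"
  shows "valency X d R a = card {z \<in> X. (p, z) \<in> R a}"
proof -
  have c: "conv_idx d R a \<le> d" "\<And>p q. (p, q) \<in> R (conv_idx d R a) \<longleftrightarrow> (q, p) \<in> R a"
    using conv_idx[OF assms(1)] by auto
  have "(p, p) \<in> R 0" using R0 assms by simp
  then have "valency X d R a = card {z \<in> X. (p, z) \<in> R a \<and> (z, p) \<in> R (conv_idx d R a)}"
    unfolding valency_def using pnum_eq[OF assms(1) c(1)] by simp
  then show ?thesis using c(2) by simp
qed

lemma qt_le: "a \<le> d \<Longrightarrow> p \<in> X \<Longrightarrow> card {z \<in> X. (p, z) \<in> R a} \<le> 2"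
  using qt valency_eq unfolding quasi_thin_def by metis

lemma fin_sub: "finite {z \<in> X. P z}" using finX by simp

lemma pred_card:
  assumes "m \<le> d" "p \<in> X"
  shows "card {z \<in> X. (z, p) \<in> R m} = valency X d R m"
proof -
  obtain m' where m': "m' \<le> d" "\<And>p q. (p, q) \<in> R m' \<longleftrightarrow> (q, p) \<in> R m" using conv_ex[OF assms(1)] by blast
  have s1: "(\<Sum>w\<in>X. card {z \<in> X. (w, z) \<in> R m}) = card (SIGMA w:X. {z \<in> X. (w, z) \<in> R m})"
    using finX by (simp add: card_SigmaI)
  have s2: "(\<Sum>w\<in>X. card {z \<in> X. (w, z) \<in> R m'}) = card (SIGMA w:X. {z \<in> X. (w, z) \<in> R m'})"
    using finX by (simp add: card_SigmaI)
  have e1: "(SIGMA w:X. {z \<in> X. (w, z) \<in> R m}) = R m" using R_sub[OF assms(1)] by auto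
  have e2: "(SIGMA w:X. {z \<in> X. (w, z) \<in> R m'}) = converse (R m)" using R_sub[OF assms(1)] m'(2) by auto
  have "card (converse (R m)) = card (R m)" by (rule card_inverse)
  moreover have "(\<Sum>w\<in>X. card {z \<in> X. (w, z) \<in> R m}) = (\<Sum>w\<in>X. valency X d R m)"
    by (rule sum.cong) (simp_all add: valency_eq[OF assms(1)])
  hence "(\<Sum>w\<in>X. card {z \<in> X. (w, z) \<in> R m}) = card X * valency X d R m" by simp
  moreover have "(\<Sum>w\<in>X. card {z \<in> X. (w, z) \<in> R m'}) = (\<Sum>w\<in>X. valency X d R m')"
    by (rule sum.cong) (simp_all add: valency_eq[OF m'(1)])
  hence "(\<Sum>w\<in>X. card {z \<in> X. (w, z) \<in> R m'}) = card X * valency X d R m'" by simp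
  ultimately have "card X * valency X d R m = card X * valency X d R m'"
    using s1 s2 e1 e2 by simp
  moreover have "card X > 0" using finX assms(2) card_gt_0_iff by blast
  ultimately have "valency X d R m = valency X d R m'" by simp
  moreover have "{z \<in> X. (z, p) \<in> R m} = {z \<in> X. (p, z) \<in> R m'}" using m'(2) by auto
  ultimately show ?thesis using valency_eq[OF m'(1) assms(2)] by simp
qed

end


lemma triple_delta:
  fixes F :: "nat \<Rightarrow> nat \<Rightarrow> nat \<Rightarrow> 'f::comm_monoid_add"
  assumes "i0 \<le> d" "j0 \<le> d" "l0 \<le> d"
    and P: "\<And>i j l. i \<le> d \<Longrightarrow> j \<le> d \<Longrightarrow> l \<le> d \<Longrightarrow> P i j l \<longleftrightarrow> (i = i0 \<and> j = j0 \<and> l = l0)"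
  shows "(\<Sum>i\<in>{0..d}. \<Sum>j\<in>{0..d}. \<Sum>l\<in>{0..d}. if P i j l then F i j l else 0) = F i0 j0 l0"
proof -
  have A: "(\<Sum>l\<in>{0..d}. if P i j l then F i j l else 0) = (if i = i0 \<and> j = j0 then F i0 j0 l0 else 0)"
    if "i \<le> d" "j \<le> d" for i j
  proof (cases "i = i0 \<and> j = j0")
    case True
    then have "(\<Sum>l\<in>{0..d}. if P i j l then F i j l else 0) = (\<Sum>l\<in>{0..d}. if l = l0 then F i0 j0 l0 else 0)"
      using that by (intro sum.cong refl) (auto simp: P)
    then show ?thesis using True assms(3) by simp
  next
    case False
    then have "(\<Sum>l\<in>{0..d}. if P i j l then F i j l else 0) = (\<Sum>l\<in>{0..d}. 0)"
      using that by (intro sum.cong refl) (auto simp: P)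
    moreover have "(\<Sum>l\<in>{0..d}. (0::'f)) = 0" by simp
    moreover have "(if i = i0 \<and> j = j0 then F i0 j0 l0 else 0) = 0" by (rule if_not_P[OF False])
    ultimately show ?thesis by simp
  qed
  have B: "(\<Sum>j\<in>{0..d}. \<Sum>l\<in>{0..d}. if P i j l then F i j l else 0) = (if i = i0 then F i0 j0 l0 else 0)"
    if "i \<le> d" for i
  proof -
    have "(\<Sum>j\<in>{0..d}. \<Sum>l\<in>{0..d}. if P i j l then F i j l else 0) = (\<Sum>j\<in>{0..d}. if j = j0 then (if i = i0 then F i0 j0 l0 else 0) else 0)"
      using that by (intro sum.cong refl) (auto simp: A)
    then show ?thesis using assms(2) by simp
  qed
  have "(\<Sum>i\<in>{0..d}. \<Sum>j\<in>{0..d}. \<Sum>l\<in>{0..d}. if P i j l then F i j l else 0) = (\<Sum>i\<in>{0..d}. if i = i0 then F i0 j0 l0 else 0)"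
    by (intro sum.cong refl) (auto simp: B)
  then show ?thesis using assms(1) by simp
qed

context qts
begin

lemma inner_eval:
  "mat_mult X (dual_idem R x i) (adj_mat R j) = (\<lambda>y z. if y \<in> X \<and> (x, y) \<in> R i \<and> (y, z) \<in> R j then 1 else (0::'f::field))"
proof (intro ext)
  fix y z
  have "mat_mult X (dual_idem R x i) (adj_mat R j) y z
     = (\<Sum>w\<in>X. if w = y then (if (x, y) \<in> R i \<and> (y, z) \<in> R j then 1 else (0::'f)) else 0)"
    unfolding mat_mult_def dual_idem_def adj_mat_def by (intro sum.cong refl) auto
  also have "\<dots> = (if y \<in> X \<and> (x, y) \<in> R i \<and> (y, z) \<in> R j then 1 else 0)"
    using finX by simp
  finally show "mat_mult X (dual_idem R x i) (adj_mat R j) y z = (if y \<in> X \<and> (x, y) \<in> R i \<and> (y, z) \<in> R j then 1 else (0::'f))" .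
qed

lemma gen_eval:
  "mat_mult X (mat_mult X (dual_idem R x i) (adj_mat R j)) (dual_idem R x l) y z
    = (if y \<in> X \<and> z \<in> X \<and> (x, y) \<in> R i \<and> (y, z) \<in> R j \<and> (x, z) \<in> R l then 1 else (0::'f::field))"
proof -
  have "mat_mult X (mat_mult X (dual_idem R x i) (adj_mat R j)) (dual_idem R x l) y z
     = (\<Sum>w\<in>X. if w = z then (if y \<in> X \<and> (x, y) \<in> R i \<and> (y, z) \<in> R j \<and> (x, z) \<in> R l then 1 else (0::'f)) else 0)"
    unfolding inner_eval unfolding mat_mult_def dual_idem_def by (intro sum.cong refl) auto
  also have "\<dots> = (if y \<in> X \<and> z \<in> X \<and> (x, y) \<in> R i \<and> (y, z) \<in> R j \<and> (x, z) \<in> R l then 1 else 0)"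
    using finX by auto
  finally show ?thesis .
qed

definition bconst :: "('a \<Rightarrow> 'a \<Rightarrow> 'f::field) \<Rightarrow> bool" where
  "bconst M \<longleftrightarrow> (\<forall>a b a' b' i k n. i \<le> d \<longrightarrow> k \<le> d \<longrightarrow> n \<le> d \<longrightarrow>
      (x, a) \<in> R i \<longrightarrow> (x, a') \<in> R i \<longrightarrow> (a, b) \<in> R k \<longrightarrow> (a', b') \<in> R k \<longrightarrow>
      (x, b) \<in> R n \<longrightarrow> (x, b') \<in> R n \<longrightarrow> M a b = M a' b')"

definition blk :: "('a \<Rightarrow> 'a \<Rightarrow> 'f::field) set" where
  "blk = {M. M \<in> matrices X \<and> bconst M}"

lemma blkD:
  assumes "M \<in> blk" "i \<le> d" "k \<le> d" "n \<le> d" "(x, a) \<in> R i" "(x, a') \<in> R i" "(a, b) \<in> R k" "(a', b') \<in> R k"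
    "(x, b) \<in> R n" "(x, b') \<in> R n"
  shows "M a b = M a' b'"
proof -
  have "bconst M" using assms(1) unfolding blk_def by blast
  then show ?thesis unfolding bconst_def using assms(2-) by blast
qed

lemma blk_mat: "M \<in> blk \<Longrightarrow> M \<in> matrices X" unfolding blk_def by blast

lemma blkI:
  assumes "M \<in> matrices X" "\<And>a b a' b' i k n. i \<le> d \<Longrightarrow> k \<le> d \<Longrightarrow> n \<le> d \<Longrightarrow> (x, a) \<in> R i \<Longrightarrow> (x, a') \<in> R i \<Longrightarrow> (a, b) \<in> R k \<Longrightarrow> (a', b') \<in> R k \<Longrightarrow>
    (x, b) \<in> R n \<Longrightarrow> (x, b') \<in> R n \<Longrightarrow> M a b = M a' b'"
  shows "M \<in> blk"
proof -
  have "bconst M" unfolding bconst_def using assms(2) by blast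
  then show ?thesis using assms(1) unfolding blk_def by blast
qed

lemma T0_sum_eval:
  assumes "y \<in> X" "z \<in> X" "i0 \<le> d" "j0 \<le> d" "l0 \<le> d" "(x, y) \<in> R i0" "(y, z) \<in> R j0" "(x, z) \<in> R l0"
  shows "(\<Sum>i\<in>{0..d}. \<Sum>j\<in>{0..d}. \<Sum>l\<in>{0..d}.
             c i j l * mat_mult X (mat_mult X (dual_idem R x i) (adj_mat R j)) (dual_idem R x l) y z) = (c i0 j0 l0 :: 'f::field)"
proof -
  have "(\<Sum>i\<in>{0..d}. \<Sum>j\<in>{0..d}. \<Sum>l\<in>{0..d}.
             c i j l * mat_mult X (mat_mult X (dual_idem R x i) (adj_mat R j)) (dual_idem R x l) y z)
     = (\<Sum>i\<in>{0..d}. \<Sum>j\<in>{0..d}. \<Sum>l\<in>{0..d}. if (x, y) \<in> R i \<and> (y, z) \<in> R j \<and> (x, z) \<in> R l then c i j l else 0)"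
    unfolding gen_eval using assms(1,2) by (intro sum.cong refl) auto
  also have "\<dots> = c i0 j0 l0"
  proof (rule triple_delta[OF assms(3,4,5)])
    fix i j l assume "i \<le> d" "j \<le> d" "l \<le> d"
    show "(x, y) \<in> R i \<and> (y, z) \<in> R j \<and> (x, z) \<in> R l \<longleftrightarrow> i = i0 \<and> j = j0 \<and> l = l0"
    proof
      assume H: "(x, y) \<in> R i \<and> (y, z) \<in> R j \<and> (x, z) \<in> R l"
      show "i = i0 \<and> j = j0 \<and> l = l0"
        using disj[OF \<open>i \<le> d\<close> assms(3) _ assms(6)] disj[OF \<open>j \<le> d\<close> assms(4) _ assms(7)]
          disj[OF \<open>l \<le> d\<close> assms(5) _ assms(8)] H by blast
    next
      assume "i = i0 \<and> j = j0 \<and> l = l0"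
      then show "(x, y) \<in> R i \<and> (y, z) \<in> R j \<and> (x, z) \<in> R l" using assms(6-8) by simp
    qed
  qed
  finally show ?thesis .
qed

lemma T0_sum_out:
  assumes "y \<notin> X \<or> z \<notin> X"
  shows "(\<Sum>i\<in>{0..d}. \<Sum>j\<in>{0..d}. \<Sum>l\<in>{0..d}.
             c i j l * mat_mult X (mat_mult X (dual_idem R x i) (adj_mat R j)) (dual_idem R x l) y z) = (0 :: 'f::field)"
  unfolding gen_eval using assms by auto

lemma T0_eq_blk: "T0 X d R x = (blk :: ('a \<Rightarrow> 'a \<Rightarrow> 'f::field) set)"
proof (intro equalityI subsetI)
  fix M :: "'a \<Rightarrow> 'a \<Rightarrow> 'f"
  assume "M \<in> T0 X d R x"
  then have "\<exists>c :: nat \<Rightarrow> nat \<Rightarrow> nat \<Rightarrow> 'f. M = (\<lambda>y z. \<Sum>i\<in>{0..d}. \<Sum>j\<in>{0..d}. \<Sum>l\<in>{0..d}.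
             c i j l * mat_mult X (mat_mult X (dual_idem R x i) (adj_mat R j)) (dual_idem R x l) y z)"
    unfolding T0_def mem_Collect_eq .
  then obtain c :: "nat \<Rightarrow> nat \<Rightarrow> nat \<Rightarrow> 'f" where M: "M = (\<lambda>y z. \<Sum>i\<in>{0..d}. \<Sum>j\<in>{0..d}. \<Sum>l\<in>{0..d}.
             c i j l * mat_mult X (mat_mult X (dual_idem R x i) (adj_mat R j)) (dual_idem R x l) y z)"
    by (elim exE)
  have "M \<in> matrices X" unfolding matrices_def M mem_Collect_eq by (intro allI impI T0_sum_out)
  moreover have "M a b = M a' b'" if "i \<le> d" "k \<le> d" "n \<le> d" "(x, a) \<in> R i" "(x, a') \<in> R i"
    "(a, b) \<in> R k" "(a', b') \<in> R k" "(x, b) \<in> R n" "(x, b') \<in> R n" for a b a' b' i k n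
  proof -
    have "a \<in> X" "b \<in> X" "a' \<in> X" "b' \<in> X" using that R_sub by blast+
    have "M a b = c i k n" unfolding M using T0_sum_eval[where c=c, OF \<open>a \<in> X\<close> \<open>b \<in> X\<close> that(1-3) that(4) that(6) that(8)] by simp
    moreover have "M a' b' = c i k n" unfolding M using T0_sum_eval[where c=c, OF \<open>a' \<in> X\<close> \<open>b' \<in> X\<close> that(1-3) that(5) that(7) that(9)] by simp
    ultimately show ?thesis by simp
  qed
  ultimately show "M \<in> blk" by (rule blkI)
next
  fix M :: "'a \<Rightarrow> 'a \<Rightarrow> 'f"
  assume Mb: "M \<in> blk"
  define P where "P = (\<lambda>i j l p. (x, fst p) \<in> R i \<and> (fst p, snd p) \<in> R j \<and> (x, snd p) \<in> R l)"
  define c where "c = (\<lambda>i j l. M (fst (SOME p. P i j l p)) (snd (SOME p. P i j l p)))"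
  have "M = (\<lambda>y z. \<Sum>i\<in>{0..d}. \<Sum>j\<in>{0..d}. \<Sum>l\<in>{0..d}.
             c i j l * mat_mult X (mat_mult X (dual_idem R x i) (adj_mat R j)) (dual_idem R x l) y z)"
  proof (intro ext)
    fix y z
    show "M y z = (\<Sum>i\<in>{0..d}. \<Sum>j\<in>{0..d}. \<Sum>l\<in>{0..d}.
             c i j l * mat_mult X (mat_mult X (dual_idem R x i) (adj_mat R j)) (dual_idem R x l) y z)"
    proof (cases "y \<in> X \<and> z \<in> X")
      case True
      obtain i0 where i0: "i0 \<le> d" "(x, y) \<in> R i0" using cover xX True by blast
      obtain j0 where j0: "j0 \<le> d" "(y, z) \<in> R j0" using cover True by blast
      obtain l0 where l0: "l0 \<le> d" "(x, z) \<in> R l0" using cover xX True by blast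
      have ex: "\<exists>p. P i0 j0 l0 p" unfolding P_def using i0 j0 l0 by (intro exI[of _ "(y, z)"]) simp
      define p where "p = (SOME p. P i0 j0 l0 p)"
      have "P i0 j0 l0 p" unfolding p_def by (rule someI_ex[OF ex])
      then have "M (fst p) (snd p) = M y z" using blkD[OF Mb i0(1) j0(1) l0(1) _ i0(2) _ j0(2) _ l0(2)] unfolding P_def by blast
      have "(\<Sum>i\<in>{0..d}. \<Sum>j\<in>{0..d}. \<Sum>l\<in>{0..d}.
             c i j l * mat_mult X (mat_mult X (dual_idem R x i) (adj_mat R j)) (dual_idem R x l) y z) = c i0 j0 l0"
        using True by (intro T0_sum_eval[where c=c] i0 j0 l0) auto
      moreover have "c i0 j0 l0 = M (fst p) (snd p)" unfolding c_def p_def by simp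
      ultimately show ?thesis using \<open>M (fst p) (snd p) = M y z\<close> by simp
    next
      case False
      have "M \<in> matrices X" using Mb by (rule blk_mat)
      then have "\<forall>y z. (y \<notin> X \<or> z \<notin> X) \<longrightarrow> M y z = 0" unfolding matrices_def by simp
      then have "M y z = 0" using False by blast
      moreover have "y \<notin> X \<or> z \<notin> X" using False by simp
      ultimately show ?thesis using T0_sum_out[where c=c] by simp
    qed
  qed
  then show "M \<in> T0 X d R x" unfolding T0_def mem_Collect_eq by (rule exI[of _ c])
qed

end


context qts
begin

definition cond :: bool where
  "cond \<longleftrightarrow> (\<exists>u\<le>d. \<exists>v\<le>d. \<exists>w\<le>d. \<exists>y\<le>d. \<exists>z\<le>d.
          valency X d R u = 2 \<and> valency X d R v = 2 \<and> valency X d R w = 2 \<and>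
          valency X d R y = 2 \<and> valency X d R z = 2 \<and>
          pnum X R u v w = 1 \<and> pnum X R w y z = 1 \<and>
          card (cplx_prod X d R (conv_idx d R u) z) = 1)"

lemma card2_le:
  assumes "finite S" "p \<in> S" "q \<in> S" "p \<noteq> q"
  shows "2 \<le> card S"
proof -
  have "card {p, q} = 2" using assms(4) by simp
  moreover have "card {p, q} \<le> card S" using assms by (intro card_mono) auto
  ultimately show ?thesis by simp
qed

lemma card1_eq:
  assumes "finite S" "card S \<le> 1" "p \<in> S" "q \<in> S"
  shows "p = q"
  using assms card_le_Suc0_iff_eq[OF assms(1)] by auto

lemma valency_le2: "a \<le> d \<Longrightarrow> valency X d R a \<le> 2"
  using qt unfolding quasi_thin_def by blast

lemma card_pos_ex:
  assumes "0 < card {z \<in> X. P z}"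
  obtains z where "z \<in> X" "P z"
proof -
  have "{z \<in> X. P z} \<noteq> {}" using assms by (metis card.empty less_irrefl)
  then show ?thesis using that by blast
qed

lemma ex_card_pos:
  assumes "z \<in> X" "P z"
  shows "0 < card {z \<in> X. P z}"
proof -
  have "{z \<in> X. P z} \<noteq> {}" using assms by blast
  moreover have "finite {z \<in> X. P z}" using finX by simp
  ultimately show ?thesis using card_gt_0_iff by blast
qed

lemma cplx_one:
  assumes "i \<le> d" "n \<le> d" "k \<le> d" "(x, a) \<in> R i" "(x, b) \<in> R n" "(a, b) \<in> R k"
    and all: "\<And>s t. (x, s) \<in> R i \<Longrightarrow> (x, t) \<in> R n \<Longrightarrow> (s, t) \<in> R k"
  shows "card (cplx_prod X d R (conv_idx d R i) n) = 1"
proof -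
  define i' where "i' = conv_idx d R i"
  have i': "i' \<le> d" "\<And>p q. (p, q) \<in> R i' \<longleftrightarrow> (q, p) \<in> R i" using conv_idx[OF assms(1)] unfolding i'_def by auto
  obtain n' where n': "n' \<le> d" "\<And>p q. (p, q) \<in> R n' \<longleftrightarrow> (q, p) \<in> R n" using conv_ex[OF assms(2)] by blast
  have "cplx_prod X d R i' n = {R k}"
  proof (intro equalityI subsetI)
    fix S assume "S \<in> cplx_prod X d R i' n"
    then obtain c0 where c0: "S = R c0" "c0 \<le> d" "pnum X R i' n c0 > 0" unfolding cplx_prod_def by blast
    obtain p q where pq: "(p, q) \<in> R c0" using R_ne[OF c0(2)] by auto
    have "card {z \<in> X. (p, z) \<in> R i' \<and> (z, q) \<in> R n} > 0" using c0(3) pnum_eq[OF i'(1) assms(2) c0(2) pq] by simp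
    then obtain r where r: "r \<in> X" "(p, r) \<in> R i'" "(r, q) \<in> R n" by (rule card_pos_ex) blast
    have "q \<in> X" "(p, q) \<in> R c0 \<and> (q, r) \<in> R n'" using pq r n'(2) R_sub[OF c0(2) pq] by auto
    then have "card {t \<in> X. (p, t) \<in> R c0 \<and> (t, r) \<in> R n'} > 0" by (rule ex_card_pos)
    moreover have ax: "(a, x) \<in> R i'" using i'(2) assms(4) by simp
    ultimately have "card {t \<in> X. (a, t) \<in> R c0 \<and> (t, x) \<in> R n'} > 0"
      using const[OF c0(2) n'(1) i'(1) r(2) ax] by simp
    then obtain t where t: "t \<in> X" "(a, t) \<in> R c0" "(t, x) \<in> R n'" by (rule card_pos_ex) blast
    have "(a, t) \<in> R k" using all[OF assms(4)] t(3) n'(2) by simp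
    then have "c0 = k" using disj[OF c0(2) assms(3) t(2)] by simp
    then show "S \<in> {R k}" using c0 by simp
  next
    fix S assume "S \<in> {R k}"
    then have S: "S = R k" by simp
    have "(a, x) \<in> R i' \<and> (x, b) \<in> R n" using i'(2) assms(4,5) by simp
    with xX have "card {z \<in> X. (a, z) \<in> R i' \<and> (z, b) \<in> R n} > 0" by (rule ex_card_pos)
    then have "pnum X R i' n k > 0" using pnum_eq[OF i'(1) assms(2) assms(3) assms(6)] by simp
    then show "S \<in> cplx_prod X d R i' n" unfolding cplx_prod_def using S assms(3) by blast
  qed
  then show ?thesis unfolding i'_def by simp
qed

lemma half:
  assumes dd: "i \<le> d" "k \<le> d" "n \<le> d" "l \<le> d" "j \<le> d" "m \<le> d"
    and xa: "(x, a) \<in> R i" and xa': "(x, a') \<in> R i" and ab: "(a, b) \<in> R k" and ab': "(a', b') \<in> R k"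
    and xb: "(x, b) \<in> R n" and xb': "(x, b') \<in> R n"
    and Ca: "{z \<in> X. (x, z) \<in> R l \<and> (a, z) \<in> R j} = {c}"
    and Db: "{z \<in> X. (x, z) \<in> R l \<and> (z, b) \<in> R m} = {c}"
    and Ca': "{z \<in> X. (x, z) \<in> R l \<and> (a', z) \<in> R j} = {c'}"
    and Db': "{z \<in> X. (x, z) \<in> R l \<and> (z, b') \<in> R m} = {e'}"
    and ne: "c' \<noteq> e'"
    and L2: "card {z \<in> X. (x, z) \<in> R l} = 2"
  shows cond
proof -
  have aX: "a \<in> X" and a'X: "a' \<in> X" and bX: "b \<in> X" and b'X: "b' \<in> X"
    using R_sub dd xa xa' xb xb' by blast+
  have "c \<in> {z \<in> X. (x, z) \<in> R l \<and> (a, z) \<in> R j}" using Ca by simp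
  then have cX: "c \<in> X" and xc: "(x, c) \<in> R l" and ac: "(a, c) \<in> R j" by auto
  have "c \<in> {z \<in> X. (x, z) \<in> R l \<and> (z, b) \<in> R m}" using Db by simp
  then have cb: "(c, b) \<in> R m" by auto
  have "c' \<in> {z \<in> X. (x, z) \<in> R l \<and> (a', z) \<in> R j}" using Ca' by simp
  then have c'X: "c' \<in> X" and xc': "(x, c') \<in> R l" and a'c': "(a', c') \<in> R j" by auto
  have "e' \<in> {z \<in> X. (x, z) \<in> R l \<and> (z, b') \<in> R m}" using Db' by simp
  then have e'X: "e' \<in> X" and xe': "(x, e') \<in> R l" and e'b': "(e', b') \<in> R m" by auto
  have Cu: "z = c" if "z \<in> X" "(x, z) \<in> R l" "(a, z) \<in> R j" for z
  proof -
    have "z \<in> {z \<in> X. (x, z) \<in> R l \<and> (a, z) \<in> R j}" using that by simp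
    then show ?thesis using Ca by simp
  qed
  have Du: "z = c" if "z \<in> X" "(x, z) \<in> R l" "(z, b) \<in> R m" for z
  proof -
    have "z \<in> {z \<in> X. (x, z) \<in> R l \<and> (z, b) \<in> R m}" using that by simp
    then show ?thesis using Db by simp
  qed
  have Cu': "z = c'" if "z \<in> X" "(x, z) \<in> R l" "(a', z) \<in> R j" for z
  proof -
    have "z \<in> {z \<in> X. (x, z) \<in> R l \<and> (a', z) \<in> R j}" using that by simp
    then show ?thesis using Ca' by simp
  qed
  have Du': "z = e'" if "z \<in> X" "(x, z) \<in> R l" "(z, b') \<in> R m" for z
  proof -
    have "z \<in> {z \<in> X. (x, z) \<in> R l \<and> (z, b') \<in> R m}" using that by simp
    then show ?thesis using Db' by simp
  qed
  define L where "L = {z \<in> X. (x, z) \<in> R l}"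
  have finL: "finite L" unfolding L_def using finX by simp
  have cL: "c \<in> L" unfolding L_def using cX xc by simp
  have "card (L - {c}) = 1" using L2 cL finL unfolding L_def by (simp add: card_Diff_singleton)
  then obtain c2 where c2: "c2 \<in> L - {c}" by (metis card_0_eq finite_Diff finL ex_in_conv zero_neq_one)
  then have c2X: "c2 \<in> X" and xc2: "(x, c2) \<in> R l" and c2c: "c2 \<noteq> c" unfolding L_def by auto
  have "{c, c2} = L"
  proof (rule card_seteq[OF finL])
    show "{c, c2} \<subseteq> L" using cL c2 by auto
    show "card L \<le> card {c, c2}" using L2 c2c unfolding L_def by simp
  qed
  then have Lcases: "z = c \<or> z = c2" if "z \<in> X" "(x, z) \<in> R l" for z
    using that unfolding L_def by blast
  (* w = l *)
  have Vl: "valency X d R l = 2" using valency_eq[OF dd(4) xX] L2 by simp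
  have Plmn: "pnum X R l m n = 1" using pnum_eq[OF dd(4) dd(6) dd(3) xb] Db by simp
  (* v = j *)
  have "(a, c) \<in> R j \<and> (c, b) \<in> R m" using ac cb by simp
  with cX have "0 < card {z \<in> X. (a, z) \<in> R j \<and> (z, b) \<in> R m}" by (rule ex_card_pos)
  then have "0 < card {z \<in> X. (a', z) \<in> R j \<and> (z, b') \<in> R m}" using const[OF dd(5) dd(6) dd(2) ab ab'] by simp
  then obtain c'' where c''X: "c'' \<in> X" and a'c'': "(a', c'') \<in> R j" and c''b': "(c'', b') \<in> R m"
    by (rule card_pos_ex) blast
  have c''L: "(x, c'') \<notin> R l"
  proof
    assume "(x, c'') \<in> R l"
    then have "c'' = c'" "c'' = e'" using Cu' Du' c''X a'c'' c''b' by auto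
    then show False using ne by simp
  qed
  have "c'' \<noteq> c'" using c''L xc' by auto
  then have "2 \<le> card {z \<in> X. (a', z) \<in> R j}" using card2_le[of "{z \<in> X. (a', z) \<in> R j}" c'' c'] finX c''X c'X a'c'' a'c' by simp
  then have Vj: "valency X d R j = 2" using valency_eq[OF dd(5) a'X] valency_le2[OF dd(5)] by simp
  (* y = m *)
  have "c'' \<noteq> e'" using c''L xe' by auto
  then have "2 \<le> card {z \<in> X. (z, b') \<in> R m}" using card2_le[of "{z \<in> X. (z, b') \<in> R m}" c'' e'] finX c''X e'X c''b' e'b' by simp
  then have Vm: "valency X d R m = 2" using pred_card[OF dd(6) b'X] valency_le2[OF dd(6)] by simp
  (* u = i *)
  define I where "I = {s \<in> X. (x, s) \<in> R i}"
  have finI: "finite I" unfolding I_def using finX by simp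
  have I2: "card I \<le> 2" unfolding I_def using qt_le[OF dd(1) xX] .
  have Pc: "pnum X R i j l = card {s \<in> X. (x, s) \<in> R i \<and> (s, c) \<in> R j}" using pnum_eq[OF dd(1) dd(5) dd(4) xc] .
  have Pc2: "pnum X R i j l = card {s \<in> X. (x, s) \<in> R i \<and> (s, c2) \<in> R j}" using pnum_eq[OF dd(1) dd(5) dd(4) xc2] .
  have "(x, a) \<in> R i \<and> (a, c) \<in> R j" using xa ac by simp
  with aX have "0 < card {s \<in> X. (x, s) \<in> R i \<and> (s, c) \<in> R j}" by (rule ex_card_pos)
  then have P1: "1 \<le> pnum X R i j l" using Pc by simp
  have P2: "\<not> 2 \<le> pnum X R i j l"
  proof
    assume "2 \<le> pnum X R i j l"
    then have "card I \<le> card {s \<in> X. (x, s) \<in> R i \<and> (s, c2) \<in> R j}" using Pc2 I2 by simp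
    then have "{s \<in> X. (x, s) \<in> R i \<and> (s, c2) \<in> R j} = I"
      by (intro card_seteq[OF finI]) (auto simp: I_def)
    then have "(a, c2) \<in> R j" using aX xa unfolding I_def by blast
    then have "c2 = c" using Cu c2X xc2 by simp
    then show False using c2c by simp
  qed
  have Pijl: "pnum X R i j l = 1" using P1 P2 by simp
  then have "0 < card {s \<in> X. (x, s) \<in> R i \<and> (s, c2) \<in> R j}" using Pc2 by simp
  then obtain s2 where s2X: "s2 \<in> X" and xs2: "(x, s2) \<in> R i" and s2c2: "(s2, c2) \<in> R j"
    by (rule card_pos_ex) blast
  have "s2 \<noteq> a"
  proof
    assume "s2 = a"
    then have "c2 = c" using Cu c2X xc2 s2c2 by simp
    then show False using c2c by simp
  qed
  then have "2 \<le> card I" using card2_le[OF finI, of s2 a] s2X xs2 aX xa unfolding I_def by simp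
  then have Vi: "valency X d R i = 2" using valency_eq[OF dd(1) xX] I2 unfolding I_def by simp
  (* z = n *)
  obtain l' where l': "l' \<le> d" "\<And>p q. (p, q) \<in> R l' \<longleftrightarrow> (q, p) \<in> R l" using conv_ex[OF dd(4)] by blast
  obtain n' where n': "n' \<le> d" "\<And>p q. (p, q) \<in> R n' \<longleftrightarrow> (q, p) \<in> R n" using conv_ex[OF dd(3)] by blast
  obtain i' where i': "i' \<le> d" "\<And>p q. (p, q) \<in> R i' \<longleftrightarrow> (q, p) \<in> R i" using conv_ex[OF dd(1)] by blast
  define N where "N = {t \<in> X. (x, t) \<in> R n}"
  have finN: "finite N" unfolding N_def using finX by simp
  have N2: "card N \<le> 2" unfolding N_def using qt_le[OF dd(3) xX] .
  have Qeq: "{t \<in> X. (z, t) \<in> R m \<and> (t, x) \<in> R n'} = {t \<in> X. (z, t) \<in> R m \<and> (x, t) \<in> R n}" for z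
    using n'(2) by blast
  have cx: "(c, x) \<in> R l'" and c2x: "(c2, x) \<in> R l'" using l'(2) xc xc2 by auto
  have Qcc2: "card {t \<in> X. (c, t) \<in> R m \<and> (x, t) \<in> R n} = card {t \<in> X. (c2, t) \<in> R m \<and> (x, t) \<in> R n}"
    using const[OF dd(6) n'(1) l'(1) cx c2x] Qeq by simp
  have "(c, b) \<in> R m \<and> (x, b) \<in> R n" using cb xb by simp
  with bX have Q1: "0 < card {t \<in> X. (c, t) \<in> R m \<and> (x, t) \<in> R n}" by (rule ex_card_pos)
  have Q2: "\<not> 2 \<le> card {t \<in> X. (c2, t) \<in> R m \<and> (x, t) \<in> R n}"
  proof
    assume "2 \<le> card {t \<in> X. (c2, t) \<in> R m \<and> (x, t) \<in> R n}"
    then have "card N \<le> card {t \<in> X. (c2, t) \<in> R m \<and> (x, t) \<in> R n}" using N2 by simp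
    then have "{t \<in> X. (c2, t) \<in> R m \<and> (x, t) \<in> R n} = N"
      by (intro card_seteq[OF finN]) (auto simp: N_def)
    then have "(c2, b) \<in> R m" using bX xb unfolding N_def by blast
    then have "c2 = c" using Du c2X xc2 by simp
    then show False using c2c by simp
  qed
  have Qc1: "card {t \<in> X. (c, t) \<in> R m \<and> (x, t) \<in> R n} \<le> 1" using Q2 Qcc2 by simp
  have "0 < card {t \<in> X. (c2, t) \<in> R m \<and> (x, t) \<in> R n}" using Q1 Qcc2 by simp
  then obtain t2 where t2X: "t2 \<in> X" and c2t2: "(c2, t2) \<in> R m" and xt2: "(x, t2) \<in> R n"
    by (rule card_pos_ex) blast
  have "t2 \<noteq> b"
  proof
    assume "t2 = b"
    then have "c2 = c" using Du c2X xc2 c2t2 by simp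
    then show False using c2c by simp
  qed
  then have "2 \<le> card N" using card2_le[OF finN, of t2 b] t2X xt2 bX xb unfolding N_def by simp
  then have Vn: "valency X d R n = 2" using valency_eq[OF dd(3) xX] N2 unfolding N_def by simp
  have Cp: "card (cplx_prod X d R (conv_idx d R i) n) = 1"
  proof (cases "\<forall>s t. (x, s) \<in> R i \<longrightarrow> (x, t) \<in> R n \<longrightarrow> (s, t) \<in> R k")
    case True
    show ?thesis by (rule cplx_one[OF dd(1) dd(3) dd(2) xa xb ab]) (use True in blast)
  next
    case False
    then obtain s0 t0 where xs0: "(x, s0) \<in> R i" and xt0: "(x, t0) \<in> R n" and nk: "(s0, t0) \<notin> R k" by blast
    have s0X: "s0 \<in> X" and t0X: "t0 \<in> X" using R_sub dd xs0 xt0 by blast+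
    have Meq: "{t \<in> X. (s, t) \<in> R k \<and> (t, x) \<in> R n'} = {t \<in> X. (s, t) \<in> R k \<and> (x, t) \<in> R n}" for s
      using n'(2) by blast
    have ax: "(a, x) \<in> R i'" and s0x: "(s0, x) \<in> R i'" using i'(2) xa xs0 by auto
    have Ma: "card {t \<in> X. (a, t) \<in> R k \<and> (x, t) \<in> R n} = card {t \<in> X. (s0, t) \<in> R k \<and> (x, t) \<in> R n}"
      using const[OF dd(2) n'(1) i'(1) ax s0x] Meq by simp
    have "{t \<in> X. (s0, t) \<in> R k \<and> (x, t) \<in> R n} \<subseteq> N - {t0}" unfolding N_def using nk by auto
    then have "card {t \<in> X. (s0, t) \<in> R k \<and> (x, t) \<in> R n} \<le> card (N - {t0})" using finN by (intro card_mono) auto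
    also have "\<dots> = card N - 1" using t0X xt0 unfolding N_def by (simp add: card_Diff_singleton finX)
    finally have M1: "card {t \<in> X. (a, t) \<in> R k \<and> (x, t) \<in> R n} \<le> 1" using Ma N2 by simp
    have Vb: "card {s \<in> X. (x, s) \<in> R i \<and> (s, b) \<in> R k} = card {s \<in> X. (x, s) \<in> R i \<and> (s, t0) \<in> R k}"
      using const[OF dd(1) dd(2) dd(3) xb xt0] .
    have "{s \<in> X. (x, s) \<in> R i \<and> (s, t0) \<in> R k} \<subseteq> I - {s0}" unfolding I_def using nk by auto
    then have "card {s \<in> X. (x, s) \<in> R i \<and> (s, t0) \<in> R k} \<le> card (I - {s0})" using finI by (intro card_mono) auto
    also have "\<dots> = card I - 1" using s0X xs0 unfolding I_def by (simp add: card_Diff_singleton finX)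
    finally have V1: "card {s \<in> X. (x, s) \<in> R i \<and> (s, b) \<in> R k} \<le> 1" using Vb I2 by simp
    have aa': "a \<noteq> a'"
    proof
      assume "a = a'"
      then have "b = b'" using card1_eq[OF _ M1, of b b'] finX bX b'X ab ab' xb xb' by simp
      then have "c' = c" "e' = c" using Ca Ca' Db Db' \<open>a = a'\<close> by auto
      then show False using ne by simp
    qed
    have bb': "b \<noteq> b'"
    proof
      assume "b = b'"
      then have "a = a'" using card1_eq[OF _ V1, of a a'] finX aX a'X ab ab' xa xa' by simp
      then show False using aa' by simp
    qed
    have cc': "c \<noteq> c'"
    proof
      assume "c = c'"
      have "card {s \<in> X. (x, s) \<in> R i \<and> (s, c) \<in> R j} \<le> 1" using Pc Pijl by simp
      moreover have "finite {s \<in> X. (x, s) \<in> R i \<and> (s, c) \<in> R j}" using finX by simp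
      moreover have "a \<in> {s \<in> X. (x, s) \<in> R i \<and> (s, c) \<in> R j}" using aX xa ac by simp
      moreover have "a' \<in> {s \<in> X. (x, s) \<in> R i \<and> (s, c) \<in> R j}" using a'X xa' a'c' \<open>c = c'\<close> by simp
      ultimately have "a = a'" by (intro card1_eq[of "{s \<in> X. (x, s) \<in> R i \<and> (s, c) \<in> R j}"])
      then show False using aa' by simp
    qed
    have "c' = c2" using Lcases[OF c'X xc'] cc' by auto
    then have "e' = c" using Lcases[OF e'X xe'] ne by auto
    then have "b = b'" using card1_eq[OF _ Qc1, of b b'] finX bX b'X cb e'b' xb xb' by simp
    then show ?thesis using bb' by simp
  qed
  show ?thesis unfolding cond_def
    using dd Vi Vj Vl Vm Vn Pijl Plmn Cp by blast
qed

lemma key: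
  assumes nc: "\<not> cond" and dd: "i \<le> d" "k \<le> d" "n \<le> d" "l \<le> d" "j \<le> d" "m \<le> d"
    and xa: "(x, a) \<in> R i" and xa': "(x, a') \<in> R i" and ab: "(a, b) \<in> R k" and ab': "(a', b') \<in> R k"
    and xb: "(x, b) \<in> R n" and xb': "(x, b') \<in> R n"
  shows "card {z \<in> X. (x, z) \<in> R l \<and> (a, z) \<in> R j \<and> (z, b) \<in> R m}
       = card {z \<in> X. (x, z) \<in> R l \<and> (a', z) \<in> R j \<and> (z, b') \<in> R m}"
proof -
  define L where "L = {z \<in> X. (x, z) \<in> R l}"
  define Ca where "Ca = {z \<in> X. (x, z) \<in> R l \<and> (a, z) \<in> R j}"
  define Ca' where "Ca' = {z \<in> X. (x, z) \<in> R l \<and> (a', z) \<in> R j}"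
  define Db where "Db = {z \<in> X. (x, z) \<in> R l \<and> (z, b) \<in> R m}"
  define Db' where "Db' = {z \<in> X. (x, z) \<in> R l \<and> (z, b') \<in> R m}"
  have e1: "{z \<in> X. (x, z) \<in> R l \<and> (a, z) \<in> R j \<and> (z, b) \<in> R m} = Ca \<inter> Db" unfolding Ca_def Db_def by blast
  have e2: "{z \<in> X. (x, z) \<in> R l \<and> (a', z) \<in> R j \<and> (z, b') \<in> R m} = Ca' \<inter> Db'" unfolding Ca'_def Db'_def by blast
  have fin: "finite L" "finite Ca" "finite Ca'" "finite Db" "finite Db'"
    unfolding L_def Ca_def Ca'_def Db_def Db'_def using finX by simp_all
  have sub: "Ca \<subseteq> L" "Ca' \<subseteq> L" "Db \<subseteq> L" "Db' \<subseteq> L"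
    unfolding L_def Ca_def Ca'_def Db_def Db'_def by auto
  obtain j' where j': "j' \<le> d" "\<And>p q. (p, q) \<in> R j' \<longleftrightarrow> (q, p) \<in> R j" using conv_ex[OF dd(5)] by blast
  have "Ca = {z \<in> X. (x, z) \<in> R l \<and> (z, a) \<in> R j'}" "Ca' = {z \<in> X. (x, z) \<in> R l \<and> (z, a') \<in> R j'}"
    unfolding Ca_def Ca'_def using j'(2) by auto
  then have cC: "card Ca = card Ca'" using const[OF dd(4) j'(1) dd(1) xa xa'] by simp
  have cD: "card Db = card Db'" unfolding Db_def Db'_def using const[OF dd(4) dd(6) dd(3) xb xb'] .
  have L2: "card L \<le> 2" unfolding L_def using qt_le[OF dd(4) xX] .
  have full: "A = L" if "A \<subseteq> L" "card A = card L" for A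
    using card_seteq[OF fin(1) that(1)] that(2) by simp
  have "card (Ca \<inter> Db) = card (Ca' \<inter> Db')"
  proof (cases "card Ca = card L")
    case True
    then have "Ca = L" "Ca' = L" using full sub cC by auto
    then show ?thesis using sub cD by (simp add: Int_absorb1)
  next
    case F1: False
    show ?thesis
    proof (cases "card Db = card L")
      case True
      then have "Db = L" "Db' = L" using full sub cD by auto
      then show ?thesis using sub cC by (simp add: Int_absorb2)
    next
      case F2: False
      show ?thesis
      proof (cases "card Ca = 0 \<or> card Db = 0")
        case True
        then have "Ca = {} \<and> Ca' = {} \<or> Db = {} \<and> Db' = {}" using cC cD fin by auto
        then show ?thesis by auto
      next
        case False
        have "card Ca \<le> card L" "card Db \<le> card L" using sub fin by (simp_all add: card_mono)
        then have c1: "card Ca = 1" "card Ca' = 1" "card Db = 1" "card Db' = 1" and cL: "card L = 2"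
          using False F1 F2 L2 cC cD by auto
        obtain c where Cc: "Ca = {c}" using c1(1) card_1_singletonE by blast
        obtain c' where Cc': "Ca' = {c'}" using c1(2) card_1_singletonE by blast
        obtain e where De: "Db = {e}" using c1(3) card_1_singletonE by blast
        obtain e' where De': "Db' = {e'}" using c1(4) card_1_singletonE by blast
        have nh1: "\<not> (c = e \<and> c' \<noteq> e')"
        proof
          assume h: "c = e \<and> c' \<noteq> e'"
          have "cond"
            by (rule half[OF dd xa xa' ab ab' xb xb', of c c' e'])
              (use Cc Cc' De De' h cL in \<open>simp_all add: Ca_def Ca'_def Db_def Db'_def L_def\<close>)
          then show False using nc by simp
        qed
        have nh2: "\<not> (c' = e' \<and> c \<noteq> e)"
        proof
          assume h: "c' = e' \<and> c \<noteq> e"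
          have "cond"
            by (rule half[OF dd xa' xa ab' ab xb' xb, of c' c e])
              (use Cc Cc' De De' h cL in \<open>simp_all add: Ca_def Ca'_def Db_def Db'_def L_def\<close>)
          then show False using nc by simp
        qed
        show ?thesis
        proof (cases "c = e")
          case True
          then show ?thesis using nh1 Cc Cc' De De' by auto
        next
          case False
          then show ?thesis using nh2 Cc Cc' De De' by auto
        qed
      qed
    qed
  qed
  then show ?thesis using e1 e2 by simp
qed

end


lemma sum_if_card:
  assumes "finite S"
  shows "(\<Sum>c\<in>S. if P c then K else 0) = of_nat (card {c \<in> S. P c}) * (K :: 'f::semiring_1)"
proof -
  have "(\<Sum>c\<in>S. if P c then K else 0) = (\<Sum>c\<in>{c \<in> S. P c}. K)"
    using sum.inter_filter[OF assms, of "\<lambda>_. K" P] by simp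
  then show ?thesis by simp
qed

context qts
begin

lemma blk_val:
  assumes "(M :: 'a \<Rightarrow> 'a \<Rightarrow> 'f::field) \<in> blk"
  shows "\<exists>f. \<forall>a c i j l. i \<le> d \<longrightarrow> j \<le> d \<longrightarrow> l \<le> d \<longrightarrow> (x, a) \<in> R i \<longrightarrow> (a, c) \<in> R j \<longrightarrow> (x, c) \<in> R l \<longrightarrow> M a c = f i j l"
proof -
  have "M \<in> T0 X d R x" using assms T0_eq_blk by blast
  then have "\<exists>c :: nat \<Rightarrow> nat \<Rightarrow> nat \<Rightarrow> 'f. M = (\<lambda>y z. \<Sum>i\<in>{0..d}. \<Sum>j\<in>{0..d}. \<Sum>l\<in>{0..d}.
             c i j l * mat_mult X (mat_mult X (dual_idem R x i) (adj_mat R j)) (dual_idem R x l) y z)"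
    unfolding T0_def mem_Collect_eq .
  then obtain f :: "nat \<Rightarrow> nat \<Rightarrow> nat \<Rightarrow> 'f" where M: "M = (\<lambda>y z. \<Sum>i\<in>{0..d}. \<Sum>j\<in>{0..d}. \<Sum>l\<in>{0..d}.
             f i j l * mat_mult X (mat_mult X (dual_idem R x i) (adj_mat R j)) (dual_idem R x l) y z)"
    by (elim exE)
  have "M a c = f i j l" if "i \<le> d" "j \<le> d" "l \<le> d" "(x, a) \<in> R i" "(a, c) \<in> R j" "(x, c) \<in> R l" for a c i j l
  proof -
    have "a \<in> X" "c \<in> X" using that R_sub by blast+
    then show ?thesis unfolding M using T0_sum_eval[where c=f, OF _ _ that] by simp
  qed
  then show ?thesis by blast
qed

lemma mult_expand:
  fixes A B :: "'a \<Rightarrow> 'a \<Rightarrow> 'f::field"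
  assumes hA: "\<And>a c i j l. i \<le> d \<Longrightarrow> j \<le> d \<Longrightarrow> l \<le> d \<Longrightarrow> (x, a) \<in> R i \<Longrightarrow> (a, c) \<in> R j \<Longrightarrow> (x, c) \<in> R l \<Longrightarrow> A a c = fA i j l"
    and hB: "\<And>a c i j l. i \<le> d \<Longrightarrow> j \<le> d \<Longrightarrow> l \<le> d \<Longrightarrow> (x, a) \<in> R i \<Longrightarrow> (a, c) \<in> R j \<Longrightarrow> (x, c) \<in> R l \<Longrightarrow> B a c = fB i j l"
    and dd: "i \<le> d" "n \<le> d" and xa: "(x, a) \<in> R i" and xb: "(x, b) \<in> R n"
  shows "mat_mult X A B a b = (\<Sum>l\<in>{0..d}. \<Sum>j\<in>{0..d}. \<Sum>m\<in>{0..d}.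
      of_nat (card {c \<in> X. (x, c) \<in> R l \<and> (a, c) \<in> R j \<and> (c, b) \<in> R m}) * (fA i j l * fB l m n))"
proof -
  have aX: "a \<in> X" and bX: "b \<in> X" using R_sub dd xa xb by blast+
  have step: "A a c * B c b = (\<Sum>l\<in>{0..d}. \<Sum>j\<in>{0..d}. \<Sum>m\<in>{0..d}.
      if (x, c) \<in> R l \<and> (a, c) \<in> R j \<and> (c, b) \<in> R m then fA i j l * fB l m n else 0)" if cX: "c \<in> X" for c
  proof -
    obtain l0 where l0: "l0 \<le> d" "(x, c) \<in> R l0" using cover[OF xX cX] by blast
    obtain j0 where j0: "j0 \<le> d" "(a, c) \<in> R j0" using cover[OF aX cX] by blast
    obtain m0 where m0: "m0 \<le> d" "(c, b) \<in> R m0" using cover[OF cX bX] by blast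
    have "A a c * B c b = fA i j0 l0 * fB l0 m0 n" using hA[OF dd(1) j0(1) l0(1) xa j0(2) l0(2)] hB[OF l0(1) m0(1) dd(2) l0(2) m0(2) xb] by simp
    also have "\<dots> = (\<Sum>l\<in>{0..d}. \<Sum>j\<in>{0..d}. \<Sum>m\<in>{0..d}.
      if (x, c) \<in> R l \<and> (a, c) \<in> R j \<and> (c, b) \<in> R m then fA i j l * fB l m n else 0)"
    proof (rule triple_delta[OF l0(1) j0(1) m0(1), symmetric])
      fix l j m assume "l \<le> d" "j \<le> d" "m \<le> d"
      show "(x, c) \<in> R l \<and> (a, c) \<in> R j \<and> (c, b) \<in> R m \<longleftrightarrow> l = l0 \<and> j = j0 \<and> m = m0"
      proof
        assume H: "(x, c) \<in> R l \<and> (a, c) \<in> R j \<and> (c, b) \<in> R m"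
        show "l = l0 \<and> j = j0 \<and> m = m0"
          using disj[OF \<open>l \<le> d\<close> l0(1) _ l0(2)] disj[OF \<open>j \<le> d\<close> j0(1) _ j0(2)]
            disj[OF \<open>m \<le> d\<close> m0(1) _ m0(2)] H by blast
      next
        assume "l = l0 \<and> j = j0 \<and> m = m0"
        then show "(x, c) \<in> R l \<and> (a, c) \<in> R j \<and> (c, b) \<in> R m" using l0 j0 m0 by simp
      qed
    qed
    finally show ?thesis .
  qed
  define g where "g = (\<lambda>c l j m. if (x, c) \<in> R l \<and> (a, c) \<in> R j \<and> (c, b) \<in> R m then fA i j l * fB l m n else (0::'f))"
  have "mat_mult X A B a b = (\<Sum>c\<in>X. \<Sum>l\<in>{0..d}. \<Sum>j\<in>{0..d}. \<Sum>m\<in>{0..d}. g c l j m)"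
    unfolding mat_mult_def g_def using step by (intro sum.cong refl) simp
  also have "\<dots> = (\<Sum>l\<in>{0..d}. \<Sum>c\<in>X. \<Sum>j\<in>{0..d}. \<Sum>m\<in>{0..d}. g c l j m)"
    by (rule sum.swap)
  also have "\<dots> = (\<Sum>l\<in>{0..d}. \<Sum>j\<in>{0..d}. \<Sum>c\<in>X. \<Sum>m\<in>{0..d}. g c l j m)"
    by (intro sum.cong refl sum.swap)
  also have "\<dots> = (\<Sum>l\<in>{0..d}. \<Sum>j\<in>{0..d}. \<Sum>m\<in>{0..d}. \<Sum>c\<in>X. g c l j m)"
    by (intro sum.cong refl sum.swap)
  also have "\<dots> = (\<Sum>l\<in>{0..d}. \<Sum>j\<in>{0..d}. \<Sum>m\<in>{0..d}.
      of_nat (card {c \<in> X. (x, c) \<in> R l \<and> (a, c) \<in> R j \<and> (c, b) \<in> R m}) * (fA i j l * fB l m n))"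
    unfolding g_def by (intro sum.cong refl sum_if_card finX)
  finally show ?thesis .
qed

lemma blk_mult:
  assumes nc: "\<not> cond" and A: "(A :: 'a \<Rightarrow> 'a \<Rightarrow> 'f::field) \<in> blk" and B: "B \<in> blk"
  shows "mat_mult X A B \<in> blk"
proof (rule blkI)
  show "mat_mult X A B \<in> matrices X"
    unfolding matrices_def mem_Collect_eq
  proof (intro allI impI)
    fix y z assume "y \<notin> X \<or> z \<notin> X"
    then show "mat_mult X A B y z = 0"
    proof
      assume "y \<notin> X"
      then have "\<And>w. A y w = 0" using blk_mat[OF A] unfolding matrices_def by blast
      then show ?thesis unfolding mat_mult_def by simp
    next
      assume "z \<notin> X"
      then have "\<And>w. B w z = 0" using blk_mat[OF B] unfolding matrices_def by blast
      then show ?thesis unfolding mat_mult_def by simp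
    qed
  qed
next
  fix a b a' b' i k n
  assume dd: "i \<le> d" "k \<le> d" "n \<le> d" and xa: "(x, a) \<in> R i" and xa': "(x, a') \<in> R i"
    and ab: "(a, b) \<in> R k" and ab': "(a', b') \<in> R k" and xb: "(x, b) \<in> R n" and xb': "(x, b') \<in> R n"
  obtain fA where hA: "\<forall>a c i j l. i \<le> d \<longrightarrow> j \<le> d \<longrightarrow> l \<le> d \<longrightarrow> (x, a) \<in> R i \<longrightarrow> (a, c) \<in> R j \<longrightarrow> (x, c) \<in> R l \<longrightarrow> A a c = fA i j l"
    using blk_val[OF A] by blast
  obtain fB where hB: "\<forall>a c i j l. i \<le> d \<longrightarrow> j \<le> d \<longrightarrow> l \<le> d \<longrightarrow> (x, a) \<in> R i \<longrightarrow> (a, c) \<in> R j \<longrightarrow> (x, c) \<in> R l \<longrightarrow> B a c = fB i j l"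
    using blk_val[OF B] by blast
  have e1: "mat_mult X A B a b = (\<Sum>l\<in>{0..d}. \<Sum>j\<in>{0..d}. \<Sum>m\<in>{0..d}.
      of_nat (card {c \<in> X. (x, c) \<in> R l \<and> (a, c) \<in> R j \<and> (c, b) \<in> R m}) * (fA i j l * fB l m n))"
    by (rule mult_expand[OF hA[rule_format] hB[rule_format] dd(1) dd(3) xa xb])
  have e2: "mat_mult X A B a' b' = (\<Sum>l\<in>{0..d}. \<Sum>j\<in>{0..d}. \<Sum>m\<in>{0..d}.
      of_nat (card {c \<in> X. (x, c) \<in> R l \<and> (a', c) \<in> R j \<and> (c, b') \<in> R m}) * (fA i j l * fB l m n))"
    by (rule mult_expand[OF hA[rule_format] hB[rule_format] dd(1) dd(3) xa' xb'])
  have "(\<Sum>l\<in>{0..d}. \<Sum>j\<in>{0..d}. \<Sum>m\<in>{0..d}.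
      of_nat (card {c \<in> X. (x, c) \<in> R l \<and> (a, c) \<in> R j \<and> (c, b) \<in> R m}) * (fA i j l * fB l m n))
    = (\<Sum>l\<in>{0..d}. \<Sum>j\<in>{0..d}. \<Sum>m\<in>{0..d}.
      of_nat (card {c \<in> X. (x, c) \<in> R l \<and> (a', c) \<in> R j \<and> (c, b') \<in> R m}) * (fA i j l * fB l m n))"
  proof (intro sum.cong refl)
    fix l j m assume "l \<in> {0..d}" "j \<in> {0..d}" "m \<in> {0..d}"
    then have "l \<le> d" "j \<le> d" "m \<le> d" by auto
    then show "of_nat (card {c \<in> X. (x, c) \<in> R l \<and> (a, c) \<in> R j \<and> (c, b) \<in> R m}) * (fA i j l * fB l m n)
      = of_nat (card {c \<in> X. (x, c) \<in> R l \<and> (a', c) \<in> R j \<and> (c, b') \<in> R m}) * (fA i j l * fB l m n)"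
      using key[OF nc dd _ _ _ xa xa' ab ab' xb xb'] by simp
  qed
  then show "mat_mult X A B a b = mat_mult X A B a' b'" using e1 e2 by simp
qed

lemma blk_zero: "(\<lambda>y z. 0 :: 'f::field) \<in> blk"
  by (rule blkI) (auto simp: matrices_def)

lemma blk_add: "(A :: 'a \<Rightarrow> 'a \<Rightarrow> 'f::field) \<in> blk \<Longrightarrow> B \<in> blk \<Longrightarrow> (\<lambda>y z. A y z + B y z) \<in> blk"
proof (rule blkI)
  assume A: "A \<in> blk" and B: "B \<in> blk"
  show "(\<lambda>y z. A y z + B y z) \<in> matrices X" using blk_mat[OF A] blk_mat[OF B] unfolding matrices_def by simp
  fix a b a' b' i k n
  assume h: "i \<le> d" "k \<le> d" "n \<le> d" "(x, a) \<in> R i" "(x, a') \<in> R i" "(a, b) \<in> R k" "(a', b') \<in> R k" "(x, b) \<in> R n" "(x, b') \<in> R n"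
  show "A a b + B a b = A a' b' + B a' b'" using blkD[OF A h] blkD[OF B h] by simp
qed

lemma blk_scale: "(A :: 'a \<Rightarrow> 'a \<Rightarrow> 'f::field) \<in> blk \<Longrightarrow> (\<lambda>y z. c * A y z) \<in> blk"
proof (rule blkI)
  assume A: "A \<in> blk"
  show "(\<lambda>y z. c * A y z) \<in> matrices X" using blk_mat[OF A] unfolding matrices_def by simp
  fix a b a' b' i k n
  assume h: "i \<le> d" "k \<le> d" "n \<le> d" "(x, a) \<in> R i" "(x, a') \<in> R i" "(a, b) \<in> R k" "(a', b') \<in> R k" "(x, b) \<in> R n" "(x, b') \<in> R n"
  show "c * A a b = c * A a' b'" using blkD[OF A h] by simp
qed

lemma blk_one: "(mat_one X :: 'a \<Rightarrow> 'a \<Rightarrow> 'f::field) \<in> blk"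
proof (rule blkI)
  show "(mat_one X :: 'a \<Rightarrow> 'a \<Rightarrow> 'f) \<in> matrices X" unfolding matrices_def mat_one_def by auto
  fix a b a' b' i k n
  assume h: "i \<le> d" "k \<le> d" "n \<le> d" "(x, a) \<in> R i" "(x, a') \<in> R i" "(a, b) \<in> R k" "(a', b') \<in> R k" "(x, b) \<in> R n" "(x, b') \<in> R n"
  have aX: "a \<in> X" "a' \<in> X" using R_sub h by blast+
  have "a = b \<longleftrightarrow> k = 0"
  proof
    assume "a = b" then have "(a, b) \<in> R 0" using R0 aX by simp
    then show "k = 0" using disj[OF h(2) _ h(6)] by simp
  next
    assume "k = 0" then show "a = b" using R0 h(6) by simp
  qed
  moreover have "a' = b' \<longleftrightarrow> k = 0"
  proof
    assume "a' = b'" then have "(a', b') \<in> R 0" using R0 aX by simp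
    then show "k = 0" using disj[OF h(2) _ h(7)] by simp
  next
    assume "k = 0" then show "a' = b'" using R0 h(7) by simp
  qed
  ultimately show "(mat_one X a b :: 'f) = mat_one X a' b'" unfolding mat_one_def using aX by simp
qed

end


context qts
begin

lemma gen_blk:
  assumes u: "u \<le> d" and v: "v \<le> d" and w: "w \<le> d"
  shows "(mat_mult X (mat_mult X (dual_idem R x u) (adj_mat R v)) (dual_idem R x w) :: 'a \<Rightarrow> 'a \<Rightarrow> 'f::field) \<in> blk"
proof (rule blkI)
  show "(mat_mult X (mat_mult X (dual_idem R x u) (adj_mat R v)) (dual_idem R x w) :: 'a \<Rightarrow> 'a \<Rightarrow> 'f) \<in> matrices X"
    unfolding matrices_def mem_Collect_eq gen_eval by auto
  fix a b a' b' i k n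
  assume h: "i \<le> d" "k \<le> d" "n \<le> d" "(x, a) \<in> R i" "(x, a') \<in> R i" "(a, b) \<in> R k" "(a', b') \<in> R k" "(x, b) \<in> R n" "(x, b') \<in> R n"
  have X: "a \<in> X" "b \<in> X" "a' \<in> X" "b' \<in> X" using R_sub h by blast+
  have e1: "(x, a) \<in> R u \<longleftrightarrow> (x, a') \<in> R u"
    using disj[OF u h(1) _ h(4)] disj[OF u h(1) _ h(5)] h(4,5) by blast
  have e2: "(a, b) \<in> R v \<longleftrightarrow> (a', b') \<in> R v"
    using disj[OF v h(2) _ h(6)] disj[OF v h(2) _ h(7)] h(6,7) by blast
  have e3: "(x, b) \<in> R w \<longleftrightarrow> (x, b') \<in> R w"
    using disj[OF w h(3) _ h(8)] disj[OF w h(3) _ h(9)] h(8,9) by blast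
  show "(mat_mult X (mat_mult X (dual_idem R x u) (adj_mat R v)) (dual_idem R x w) a b :: 'f)
      = mat_mult X (mat_mult X (dual_idem R x u) (adj_mat R v)) (dual_idem R x w) a' b'"
    unfolding gen_eval using X e1 e2 e3 by simp
qed

lemma mm_ind:
  fixes A B :: "'a \<Rightarrow> 'a \<Rightarrow> 'f::field"
  assumes "\<And>p q. A p q = (if P p q then 1 else 0)" "\<And>p q. B p q = (if Q p q then 1 else 0)"
  shows "mat_mult X A B s b = of_nat (card {t \<in> X. P s t \<and> Q t b})"
proof -
  have "mat_mult X A B s b = (\<Sum>t\<in>X. if P s t \<and> Q t b then 1 else (0::'f))"
    unfolding mat_mult_def assms by (intro sum.cong refl) simp
  also have "\<dots> = of_nat (card {t \<in> X. P s t \<and> Q t b})"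
    using sum_if_card[OF finX, of "\<lambda>t. P s t \<and> Q t b" "1::'f"] by simp
  finally show ?thesis .
qed

end

theorem lemma4p9:
  fixes X :: "'a set" and d :: nat and R :: "nat \<Rightarrow> ('a \<times> 'a) set" and x :: 'a
  assumes "is_scheme X d R" and "quasi_thin X d R" and "x \<in> X"
  shows "unital_subalgebra X (T0 X d R x :: ('a \<Rightarrow> 'a \<Rightarrow> 'f::field) set) \<longleftrightarrow>
    \<not> (\<exists>u\<le>d. \<exists>v\<le>d. \<exists>w\<le>d. \<exists>y\<le>d. \<exists>z\<le>d.
          valency X d R u = 2 \<and> valency X d R v = 2 \<and> valency X d R w = 2 \<and>
          valency X d R y = 2 \<and> valency X d R z = 2 \<and>
          pnum X R u v w = 1 \<and> pnum X R w y z = 1 \<and>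
          card (cplx_prod X d R (conv_idx d R u) z) = 1)"
proof -
  interpret qts X d R x by (rule qts.intro) (rule assms)+
  show ?thesis
  proof
    assume U: "unital_subalgebra X (T0 X d R x :: ('a \<Rightarrow> 'a \<Rightarrow> 'f::field) set)"
    show "\<not> (\<exists>u\<le>d. \<exists>v\<le>d. \<exists>w\<le>d. \<exists>y\<le>d. \<exists>z\<le>d.
          valency X d R u = 2 \<and> valency X d R v = 2 \<and> valency X d R w = 2 \<and>
          valency X d R y = 2 \<and> valency X d R z = 2 \<and>
          pnum X R u v w = 1 \<and> pnum X R w y z = 1 \<and>
          card (cplx_prod X d R (conv_idx d R u) z) = 1)"
    proof
      assume "\<exists>u\<le>d. \<exists>v\<le>d. \<exists>w\<le>d. \<exists>y\<le>d. \<exists>z\<le>d.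
          valency X d R u = 2 \<and> valency X d R v = 2 \<and> valency X d R w = 2 \<and>
          valency X d R y = 2 \<and> valency X d R z = 2 \<and>
          pnum X R u v w = 1 \<and> pnum X R w y z = 1 \<and>
          card (cplx_prod X d R (conv_idx d R u) z) = 1"
      then obtain u v w y z where dd: "u \<le> d" "v \<le> d" "w \<le> d" "y \<le> d" "z \<le> d"
        and Vu: "valency X d R u = 2" and Vz: "valency X d R z = 2"
        and Puvw: "pnum X R u v w = 1" and Pwyz: "pnum X R w y z = 1"
        and Cp: "card (cplx_prod X d R (conv_idx d R u) z) = 1" by blast
      have "0 < card {t \<in> X. (x, t) \<in> R z}" using Vz valency_eq[OF dd(5) assms(3)] by simp
      then obtain b where bX: "b \<in> X" and xb: "(x, b) \<in> R z" by (rule card_pos_ex) blast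
      have "card {t \<in> X. (x, t) \<in> R w \<and> (t, b) \<in> R y} = 1" using Pwyz pnum_eq[OF dd(3) dd(4) dd(5) xb] by simp
      then obtain t0 where T: "{t \<in> X. (x, t) \<in> R w \<and> (t, b) \<in> R y} = {t0}" by (rule card_1_singletonE)
      then have t0: "t0 \<in> X" "(x, t0) \<in> R w" "(t0, b) \<in> R y" by auto
      have "card {s \<in> X. (x, s) \<in> R u \<and> (s, t0) \<in> R v} = 1" using Puvw pnum_eq[OF dd(1) dd(2) dd(3) t0(2)] by simp
      then obtain s where S: "{s \<in> X. (x, s) \<in> R u \<and> (s, t0) \<in> R v} = {s}" by (rule card_1_singletonE)
      then have s: "s \<in> X" "(x, s) \<in> R u" "(s, t0) \<in> R v" by auto
      define I where "I = {s \<in> X. (x, s) \<in> R u}"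
      have "card I = 2" unfolding I_def using Vu valency_eq[OF dd(1) assms(3)] by simp
      moreover have "s \<in> I" unfolding I_def using s by simp
      moreover have "finite I" unfolding I_def using finX by simp
      ultimately have "card (I - {s}) = 1" by (simp add: card_Diff_singleton)
      then obtain s' where "I - {s} = {s'}" by (rule card_1_singletonE)
      then have s': "s' \<in> X" "(x, s') \<in> R u" "s' \<noteq> s" unfolding I_def by auto
      obtain k1 where k1: "k1 \<le> d" "(s, b) \<in> R k1" using cover[OF s(1) bX] by blast
      obtain k2 where k2: "k2 \<le> d" "(s', b) \<in> R k2" using cover[OF s'(1) bX] by blast
      define u' where "u' = conv_idx d R u"
      have u': "u' \<le> d" "\<And>p q. (p, q) \<in> R u' \<longleftrightarrow> (q, p) \<in> R u" using conv_idx[OF dd(1)] unfolding u'_def by auto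
      have inC: "R k \<in> cplx_prod X d R u' z" if "k \<le> d" "(p, b) \<in> R k" "(x, p) \<in> R u" for k p
      proof -
        have "(p, x) \<in> R u' \<and> (x, b) \<in> R z" using u'(2) that(3) xb by simp
        with assms(3) have "0 < card {r \<in> X. (p, r) \<in> R u' \<and> (r, b) \<in> R z}" by (rule ex_card_pos)
        then have "pnum X R u' z k > 0" using pnum_eq[OF u'(1) dd(5) that(1,2)] by simp
        then show ?thesis unfolding cplx_prod_def using that(1) by blast
      qed
      obtain S0 where "cplx_prod X d R u' z = {S0}" using Cp unfolding u'_def by (rule card_1_singletonE)
      then have "R k1 = R k2" using inC[OF k1 s(2)] inC[OF k2 s'(2)] by simp
      then have "(s, b) \<in> R k2" using k1(2) by simp
      then have "k1 = k2" using disj[OF k1(1) k2(1) k1(2)] by simp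
      define G1 where "G1 = (mat_mult X (mat_mult X (dual_idem R x u) (adj_mat R v)) (dual_idem R x w) :: 'a \<Rightarrow> 'a \<Rightarrow> 'f)"
      define G2 where "G2 = (mat_mult X (mat_mult X (dual_idem R x w) (adj_mat R y)) (dual_idem R x z) :: 'a \<Rightarrow> 'a \<Rightarrow> 'f)"
      have "G1 \<in> T0 X d R x" unfolding G1_def T0_eq_blk by (rule gen_blk[OF dd(1-3)])
      moreover have "G2 \<in> T0 X d R x" unfolding G2_def T0_eq_blk by (rule gen_blk[OF dd(3-5)])
      ultimately have "mat_mult X G1 G2 \<in> T0 X d R x" using U unfolding unital_subalgebra_def by blast
      then have PB: "mat_mult X G1 G2 \<in> blk" unfolding T0_eq_blk .
      have eq: "mat_mult X G1 G2 s b = mat_mult X G1 G2 s' b"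
        by (rule blkD[OF PB dd(1) k1(1) dd(5) s(2) s'(2) k1(2) _ xb xb]) (use k2 \<open>k1 = k2\<close> in simp)
      have mm: "mat_mult X G1 G2 p b = of_nat (card {t \<in> X. (p \<in> X \<and> t \<in> X \<and> (x, p) \<in> R u \<and> (p, t) \<in> R v \<and> (x, t) \<in> R w)
                     \<and> (t \<in> X \<and> b \<in> X \<and> (x, t) \<in> R w \<and> (t, b) \<in> R y \<and> (x, b) \<in> R z)})" for p
        by (rule mm_ind) (simp_all add: G1_def G2_def gen_eval)
      have "{t \<in> X. (s \<in> X \<and> t \<in> X \<and> (x, s) \<in> R u \<and> (s, t) \<in> R v \<and> (x, t) \<in> R w)
                     \<and> (t \<in> X \<and> b \<in> X \<and> (x, t) \<in> R w \<and> (t, b) \<in> R y \<and> (x, b) \<in> R z)} = {t0}"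
      proof
        show "{t0} \<subseteq> {t \<in> X. (s \<in> X \<and> t \<in> X \<and> (x, s) \<in> R u \<and> (s, t) \<in> R v \<and> (x, t) \<in> R w)
                     \<and> (t \<in> X \<and> b \<in> X \<and> (x, t) \<in> R w \<and> (t, b) \<in> R y \<and> (x, b) \<in> R z)}"
          using t0 s bX xb by simp
        show "{t \<in> X. (s \<in> X \<and> t \<in> X \<and> (x, s) \<in> R u \<and> (s, t) \<in> R v \<and> (x, t) \<in> R w)
                     \<and> (t \<in> X \<and> b \<in> X \<and> (x, t) \<in> R w \<and> (t, b) \<in> R y \<and> (x, b) \<in> R z)} \<subseteq> {t0}"
          using T by blast
      qed
      then have v1: "mat_mult X G1 G2 s b = 1" using mm[of s] by simp
      have E: "{t \<in> X. (s' \<in> X \<and> t \<in> X \<and> (x, s') \<in> R u \<and> (s', t) \<in> R v \<and> (x, t) \<in> R w)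
                     \<and> (t \<in> X \<and> b \<in> X \<and> (x, t) \<in> R w \<and> (t, b) \<in> R y \<and> (x, b) \<in> R z)} = {}"
      proof (rule ccontr)
        assume "{t \<in> X. (s' \<in> X \<and> t \<in> X \<and> (x, s') \<in> R u \<and> (s', t) \<in> R v \<and> (x, t) \<in> R w)
                     \<and> (t \<in> X \<and> b \<in> X \<and> (x, t) \<in> R w \<and> (t, b) \<in> R y \<and> (x, b) \<in> R z)} \<noteq> {}"
        then obtain t where t: "t \<in> X" "(x, s') \<in> R u" "(s', t) \<in> R v" "(x, t) \<in> R w" "(t, b) \<in> R y" by blast
        then have "t \<in> {t \<in> X. (x, t) \<in> R w \<and> (t, b) \<in> R y}" by simp
        then have "t = t0" using T by simp
        then have "s' \<in> {s \<in> X. (x, s) \<in> R u \<and> (s, t0) \<in> R v}" using t s' by simp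
        then have "s' = s" using S by simp
        then show False using s' by simp
      qed
      have v0: "mat_mult X G1 G2 s' b = 0" unfolding mm[of s'] E by simp
      show False using eq v1 v0 by simp
    qed
  next
    assume "\<not> (\<exists>u\<le>d. \<exists>v\<le>d. \<exists>w\<le>d. \<exists>y\<le>d. \<exists>z\<le>d.
          valency X d R u = 2 \<and> valency X d R v = 2 \<and> valency X d R w = 2 \<and>
          valency X d R y = 2 \<and> valency X d R z = 2 \<and>
          pnum X R u v w = 1 \<and> pnum X R w y z = 1 \<and>
          card (cplx_prod X d R (conv_idx d R u) z) = 1)"
    then have nc: "\<not> cond" unfolding cond_def .
    show "unital_subalgebra X (T0 X d R x :: ('a \<Rightarrow> 'a \<Rightarrow> 'f::field) set)"
      unfolding unital_subalgebra_def T0_eq_blk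
    proof (intro conjI ballI allI subsetI)
      fix M :: "'a \<Rightarrow> 'a \<Rightarrow> 'f" assume "M \<in> blk" then show "M \<in> matrices X" by (rule blk_mat)
    next
      show "(\<lambda>y z. 0 :: 'f) \<in> blk" by (rule blk_zero)
    next
      fix A B :: "'a \<Rightarrow> 'a \<Rightarrow> 'f" assume "A \<in> blk" "B \<in> blk"
      then show "(\<lambda>y z. A y z + B y z) \<in> blk" by (rule blk_add)
    next
      fix c :: 'f and A :: "'a \<Rightarrow> 'a \<Rightarrow> 'f" assume "A \<in> blk"
      then show "(\<lambda>y z. c * A y z) \<in> blk" by (rule blk_scale)
    next
      fix A B :: "'a \<Rightarrow> 'a \<Rightarrow> 'f" assume "A \<in> blk" "B \<in> blk"
      then show "mat_mult X A B \<in> blk" by (rule blk_mult[OF nc])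
    next
      show "(mat_one X :: 'a \<Rightarrow> 'a \<Rightarrow> 'f) \<in> blk" by (rule blk_one)
    qed
  qed
qed


end
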